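(* Let $H$ be a complex Hilbert space and let $A$ and $B$ be densely defined symmetric operators in $H$ with $D(A)=D(B)$. If $A+iB\subset 0$ (i.e. $Ax+iBx=0$ for all $x\in D(A)=D(B)$), then $A\subset 0$ and $B\subset 0$ (i.e. $A$ and $B$ vanish on their domain). If moreover $A$ (or $B$) is closed, then $A=B=0$ everywhere on $H$.
   Context: A densely defined operator $S$ is symmetric if $S\subset S^*$. For operators $S,T$, $S\subset T$ means $D(S)\subset D(T)$ and $S=T$ on $D(S)$; $0$ denotes the zero operator defined on all of $H$. The sum $A+iB$ is defined on $D(A)\cap D(B)$. *)

theory Defs
  imports "HOL-Analysis.Analysis"
begin

class complex_vector = real_vector +
  fixes scaleC :: "complex \<Rightarrow> 'a \<Rightarrow> 'a" (infixr "*\<^sub>C" 75)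
  assumes scaleC_add_right: "a *\<^sub>C (x + y) = a *\<^sub>C x + a *\<^sub>C y"
    and scaleC_add_left: "(a + b) *\<^sub>C x = a *\<^sub>C x + b *\<^sub>C x"
    and scaleC_scaleC: "a *\<^sub>C (b *\<^sub>C x) = (a * b) *\<^sub>C x"
    and scaleC_one: "1 *\<^sub>C x = x"
    and scaleR_scaleC: "scaleR r x = complex_of_real r *\<^sub>C x"

class complex_inner = complex_vector + real_normed_vector +
  fixes cinner :: "'a \<Rightarrow> 'a \<Rightarrow> complex"
  assumes cinner_add_left: "cinner (x + y) z = cinner x z + cinner y z"
    and cinner_scaleC_left: "cinner (a *\<^sub>C x) y = a * cinner x y"
    and cinner_commute: "cinner x y = cnj (cinner y x)"
    and cinner_self_norm: "cinner x x = complex_of_real ((norm x)\<^sup>2)"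

class chilbert_space = complex_inner + complete_space

text \<open>A (possibly unbounded) linear operator is modelled by its domain D and a
function T; the values of T outside D are irrelevant.\<close>

definition csubspace :: "'a::complex_vector set \<Rightarrow> bool" where
  "csubspace D \<longleftrightarrow> 0 \<in> D \<and> (\<forall>x\<in>D. \<forall>y\<in>D. x + y \<in> D) \<and> (\<forall>c. \<forall>x\<in>D. c *\<^sub>C x \<in> D)"

definition linear_op :: "'a::complex_vector set \<Rightarrow> ('a \<Rightarrow> 'a) \<Rightarrow> bool" where
  "linear_op D T \<longleftrightarrow> csubspace D \<and>
     (\<forall>x\<in>D. \<forall>y\<in>D. T (x + y) = T x + T y) \<and> (\<forall>c. \<forall>x\<in>D. T (c *\<^sub>C x) = c *\<^sub>C T x)"

definition densely_defined :: "'a::complex_inner set \<Rightarrow> ('a \<Rightarrow> 'a) \<Rightarrow> bool" where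
  "densely_defined D T \<longleftrightarrow> linear_op D T \<and> closure D = UNIV"

definition adj_dom :: "'a::complex_inner set \<Rightarrow> ('a \<Rightarrow> 'a) \<Rightarrow> 'a set" where
  "adj_dom D T = {y. \<exists>z. \<forall>x\<in>D. cinner (T x) y = cinner x z}"

definition adj :: "'a::complex_inner set \<Rightarrow> ('a \<Rightarrow> 'a) \<Rightarrow> 'a \<Rightarrow> 'a" where
  "adj D T y = (THE z. \<forall>x\<in>D. cinner (T x) y = cinner x z)"

definition symmetric_op :: "'a::complex_inner set \<Rightarrow> ('a \<Rightarrow> 'a) \<Rightarrow> bool" where
  "symmetric_op D T \<longleftrightarrow> densely_defined D T \<and> D \<subseteq> adj_dom D T \<and>
     (\<forall>y\<in>D. adj D T y = T y)"

definition closed_op :: "'a::complex_inner set \<Rightarrow> ('a \<Rightarrow> 'a) \<Rightarrow> bool" where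
  "closed_op D T \<longleftrightarrow> closed {(x, T x) | x. x \<in> D}"

end

theory Submission
  imports Defs
begin

lemma cinner_add_right: "cinner (x::'a::complex_inner) (y + z) = cinner x y + cinner x z"
  by (metis cinner_add_left cinner_commute complex_cnj_add)

lemma cinner_scaleC_right: "cinner (x::'a::complex_inner) (c *\<^sub>C y) = cnj c * cinner x y"
  by (metis cinner_scaleC_left cinner_commute complex_cnj_mult complex_cnj_cnj)

lemma cinner_zero_left: "cinner (0::'a::complex_inner) y = 0"
  by (metis add_0 add_cancel_left_left cinner_add_left)

lemma cinner_zero_right: "cinner (y::'a::complex_inner) 0 = 0"
  by (metis cinner_commute cinner_zero_left complex_cnj_zero)

lemma norm_add_sq:
  "(norm ((x::'a::complex_inner) + w))\<^sup>2 = (norm x)\<^sup>2 + (norm w)\<^sup>2 + 2 * Re (cinner x w)"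
proof -
  have "complex_of_real ((norm (x + w))\<^sup>2) = cinner (x+w) (x+w)"
    by (simp add: cinner_self_norm)
  also have "\<dots> = cinner x x + cinner x w + cnj (cinner x w) + cinner w w"
    by (simp add: cinner_add_left cinner_add_right cinner_commute[of w x])
  finally have "(norm (x + w))\<^sup>2 = Re (cinner x x + cinner x w + cnj (cinner x w) + cinner w w)"
    by (metis Re_complex_of_real)
  thus ?thesis by (simp add: cinner_self_norm)
qed

lemma orth_dense:
  fixes D :: "'a::complex_inner set"
  assumes cl: "closure D = UNIV" and orth: "\<forall>x\<in>D. cinner x w = 0"
  shows "w = 0"
proof -
  let ?f = "\<lambda>x. (norm (x + w))\<^sup>2 - (norm x)\<^sup>2 - (norm w)\<^sup>2"
  have c: "closed {x. ?f x = 0}"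
    by (intro closed_Collect_eq continuous_intros)
  have "D \<subseteq> {x. ?f x = 0}" proof
    fix x assume "x \<in> D"
    thus "x \<in> {x. ?f x = 0}" using orth norm_add_sq[of x w] by simp
  qed
  hence "closure D \<subseteq> {x. ?f x = 0}" using c closure_minimal by blast
  hence "?f w = 0" using cl by blast
  hence f: "(norm (w + w))\<^sup>2 - (norm w)\<^sup>2 - (norm w)\<^sup>2 = 0" by simp
  have "norm (w + w) = 2 * norm w"
    by (metis mult_2 norm_scaleR scaleR_2 abs_of_nonneg zero_le_numeral mult.commute)
  with f have "(norm w)\<^sup>2 = 0" by (simp add: power_mult_distrib)
  thus ?thesis by simp
qed

lemma sym_prop:
  fixes D :: "'a::complex_inner set"
  assumes "symmetric_op D T" "x \<in> D" "y \<in> D"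
  shows "cinner (T x) y = cinner x (T y)"
proof -
  have cl: "closure D = UNIV" using assms(1) unfolding symmetric_op_def densely_defined_def by auto
  from assms have "y \<in> adj_dom D T" unfolding symmetric_op_def by auto
  then obtain z where z: "\<forall>u\<in>D. cinner (T u) y = cinner u z" unfolding adj_dom_def by auto
  have uniq: "z' = z" if "\<forall>u\<in>D. cinner (T u) y = cinner u z'" for z'
  proof -
    have "\<forall>u\<in>D. cinner u (z' - z) = 0"
    proof
      fix u assume "u \<in> D"
      have "cinner u (z' - z) + cinner u z = cinner u z'"
        by (metis cinner_add_right diff_add_cancel)
      thus "cinner u (z' - z) = 0" using z that \<open>u \<in> D\<close> by auto
    qed
    from orth_dense[OF cl this] show ?thesis by simp
  qed
  have "adj D T y = z" unfolding adj_def
    using z uniq by (intro the_equality) auto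
  moreover have "adj D T y = T y" using assms unfolding symmetric_op_def by auto
  ultimately show ?thesis using z assms by auto
qed

lemma closed_zero_graph:
  fixes D :: "'a::complex_inner set" and T :: "'a \<Rightarrow> 'a"
  assumes "closed {(x, T x) | x. x \<in> D}" "\<forall>x\<in>D. T x = 0" "closure D = UNIV"
  shows "D = UNIV"
proof -
  have "{(x, T x) | x. x \<in> D} = {(x, 0) | x. x \<in> D}" using assms(2) by force
  have "closed ((\<lambda>x. (x, 0::'a)) -` {(x, T x) | x. x \<in> D})"
    by (rule continuous_closed_vimage[OF assms(1)]) (intro continuous_intros)
  moreover have "(\<lambda>x. (x, 0::'a)) -` {(x, T x) | x. x \<in> D} = D"
    using assms(2) by auto
  ultimately have "closed D" by simp
  thus ?thesis using assms(3) closure_closed by metis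
qed

theorem proposition2p6:
  fixes D :: "'a::chilbert_space set" and A B :: "'a \<Rightarrow> 'a"
  assumes symA: "symmetric_op D A"
    and symB: "symmetric_op D B"
    and sum0: "\<forall>x\<in>D. A x + \<i> *\<^sub>C B x = 0"
  shows "(\<forall>x\<in>D. A x = 0 \<and> B x = 0) \<and>
         ((closed_op D A \<or> closed_op D B) \<longrightarrow> D = UNIV \<and> (\<forall>x. A x = 0 \<and> B x = 0))"
proof -
  have cl: "closure D = UNIV" using symA unfolding symmetric_op_def densely_defined_def by auto
  have key: "cinner (A x) y = 0 \<and> cinner (B x) y = 0" if "x \<in> D" "y \<in> D" for x y
  proof -
    have e1: "cinner (A x) y + \<i> * cinner (B x) y = 0"
      using sum0 that by (metis cinner_add_left cinner_scaleC_left cinner_zero_left)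
    have "cinner x (A y) + cnj \<i> * cinner x (B y) = 0"
      using sum0 that by (metis cinner_add_right cinner_scaleC_right cinner_zero_right)
    hence e2: "cinner (A x) y - \<i> * cinner (B x) y = 0"
      using sym_prop[OF symA that] sym_prop[OF symB that] by simp
    from e1 e2 have "cinner (A x) y = 0" by algebra
    moreover have "cinner (B x) y = 0"
    proof -
      have "\<i> * cinner (B x) y = 0" using e1 \<open>cinner (A x) y = 0\<close> by simp
      thus ?thesis by simp
    qed
    ultimately show ?thesis by simp
  qed
  have z: "\<forall>x\<in>D. A x = 0 \<and> B x = 0"
  proof
    fix x assume x: "x \<in> D"
    have "\<forall>y\<in>D. cinner y (A x) = 0" "\<forall>y\<in>D. cinner y (B x) = 0"
      using key x by (metis cinner_commute complex_cnj_zero)+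
    thus "A x = 0 \<and> B x = 0" using orth_dense[OF cl] by blast
  qed
  moreover have "D = UNIV \<and> (\<forall>x. A x = 0 \<and> B x = 0)" if "closed_op D A \<or> closed_op D B"
  proof -
    have "D = UNIV"
    proof (cases "closed_op D A")
      case True
      thus ?thesis using z cl closed_zero_graph[where D=D and T=A] unfolding closed_op_def by blast
    next
      case False
      hence "closed_op D B" using that by blast
      thus ?thesis using z cl closed_zero_graph[where D=D and T=B] unfolding closed_op_def by blast
    qed
    thus ?thesis using z by auto
  qed
  ultimately show ?thesis by blast
qed

end
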